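(* For every context $\Gamma$ and formula $A$: if the sequent $\Gamma\vdash A$ is derivable in the sequent calculus, then it has a focused derivation.
   Context: Formulas are built from atoms ($p,q,\dots$) by a binary product: every formula is an atom or $A\bullet B$. A context is a finite (possibly empty) list of formulas; commas denote concatenation. The sequent calculus has exactly four rules (no weakening, contraction or exchange): ($\bullet L$) from $A,B,\Delta\vdash C$ infer $A\bullet B,\Delta\vdash C$ (the product must be the leftmost formula); ($\bullet R$) from $\Gamma\vdash A$ and $\Delta\vdash B$ infer $\Gamma,\Delta\vdash A\bullet B$; ($id$) $A\vdash A$; ($cut$) from $\Theta\vdash A$ and $\Gamma,A,\Delta\vdash B$ infer $\Gamma,\Theta,\Delta\vdash B$. A sequent is derivable if it is the conclusion of a finite derivation tree of these rules with no undischarged premises. A context is irreducible if its leftmost formula is not a product (i.e. it is empty or begins with an atom), and reducible otherwise. A focused derivation is a finite derivation tree (with no undischarged premises) using only: the rule ($\bullet L$); the restricted rule ($\bullet R^{foc}$): from $\Gamma\vdash A$ and $\Delta\vdash B$ infer $\Gamma,\Delta\vdash A\bullet B$, where $\Gamma$ is irreducible; and the restricted rule ($id^{atm}$): $p\vdash p$ for atoms $p$ (no cut). *)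

theory Defs
  imports Main
begin

datatype 'a fm = Atom 'a | Prod "'a fm" "'a fm"

inductive deriv :: "'a fm list \<Rightarrow> 'a fm \<Rightarrow> bool" where
  prodL: "deriv (A # B # \<Delta>) C \<Longrightarrow> deriv (Prod A B # \<Delta>) C"
| prodR: "deriv \<Gamma> A \<Longrightarrow> deriv \<Delta> B \<Longrightarrow> deriv (\<Gamma> @ \<Delta>) (Prod A B)"
| idr: "deriv [A] A"
| cut: "deriv \<Theta> A \<Longrightarrow> deriv (\<Gamma> @ [A] @ \<Delta>) B \<Longrightarrow> deriv (\<Gamma> @ \<Theta> @ \<Delta>) B"

definition irreducible :: "'a fm list \<Rightarrow> bool" where
  "irreducible \<Gamma> \<longleftrightarrow> \<Gamma> = [] \<or> (\<exists>p. hd \<Gamma> = Atom p)"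

inductive fderiv :: "'a fm list \<Rightarrow> 'a fm \<Rightarrow> bool" where
  fprodL: "fderiv (A # B # \<Delta>) C \<Longrightarrow> fderiv (Prod A B # \<Delta>) C"
| fprodR: "irreducible \<Gamma> \<Longrightarrow> fderiv \<Gamma> A \<Longrightarrow> fderiv \<Delta> B \<Longrightarrow> fderiv (\<Gamma> @ \<Delta>) (Prod A B)"
| fid: "fderiv [Atom p] (Atom p)"

end

theory Submission
  imports Defs
begin

lemma fderiv_ne: "fderiv \<Gamma> A \<Longrightarrow> \<Gamma> \<noteq> []"
  by (induction rule: fderiv.induct) auto

lemma prodR_gen: "fderiv \<Gamma> A \<Longrightarrow> fderiv \<Delta> B \<Longrightarrow> fderiv (\<Gamma> @ \<Delta>) (Prod A B)"
proof (induction arbitrary: \<Delta> rule: fderiv.induct)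
  case (fprodL A B \<Delta>' C)
  then show ?case using fderiv.fprodL by fastforce
next
  case (fprodR \<Gamma>1 A \<Delta>1 B)
  have "irreducible (\<Gamma>1 @ \<Delta>1)"
    using fprodR(1) fderiv_ne[OF fprodR(2)] by (auto simp: irreducible_def)
  then show ?case using fderiv.fprodR[OF _ fderiv.fprodR[OF fprodR(1-3)] fprodR(6)] by simp
next
  case (fid p)
  have "irreducible [Atom p]" by (simp add: irreducible_def)
  from fderiv.fprodR[OF this fderiv.fid fid(1)] show ?case by simp
qed

lemma fid_gen: "fderiv [A] A"
proof (induction A)
  case (Atom x) then show ?case by (rule fderiv.fid)
next
  case (Prod A B)
  then show ?case using prodR_gen[OF Prod(1) Prod(2)] fderiv.fprodL by fastforce
qed

lemma cut_prod:
  assumes cA: "\<And>\<Theta> \<Gamma> \<Delta> C. fderiv \<Theta> A1 \<Longrightarrow> fderiv (\<Gamma>@[A1]@\<Delta>) C \<Longrightarrow> fderiv (\<Gamma>@\<Theta>@\<Delta>) C"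
    and cB: "\<And>\<Theta> \<Gamma> \<Delta> C. fderiv \<Theta> B1 \<Longrightarrow> fderiv (\<Gamma>@[B1]@\<Delta>) C \<Longrightarrow> fderiv (\<Gamma>@\<Theta>@\<Delta>) C"
  shows "fderiv \<Theta> X \<Longrightarrow> X = Prod A1 B1 \<Longrightarrow> fderiv (A1#B1#\<Delta>) C \<Longrightarrow> fderiv (\<Theta>@\<Delta>) C"
proof (induction arbitrary: \<Delta> rule: fderiv.induct)
  case (fprodL A B \<Delta>' C')
  then show ?case using fderiv.fprodL by fastforce
next
  case (fprodR \<Gamma>1 A \<Delta>1 B)
  have "fderiv ([] @ \<Gamma>1 @ (B1 # \<Delta>)) C"
    using cA[of \<Gamma>1 "[]" "B1#\<Delta>" C] fprodR by simp
  then have "fderiv (\<Gamma>1 @ [B1] @ \<Delta>) C" by simp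
  from cB[OF _ this, of \<Delta>1] fprodR show ?case by simp
next
  case (fid p) then show ?case by simp
qed

lemma split_app: "\<Gamma>1 @ \<Delta>1 = \<Gamma> @ A # \<Delta> \<Longrightarrow>
  (\<exists>\<Delta>'. \<Gamma>1 = \<Gamma> @ A # \<Delta>' \<and> \<Delta> = \<Delta>' @ \<Delta>1) \<or> (\<exists>\<Gamma>'. \<Delta>1 = \<Gamma>' @ A # \<Delta> \<and> \<Gamma> = \<Gamma>1 @ \<Gamma>')"
  by (auto simp: append_eq_append_conv2 append_eq_Cons_conv)

lemma cut_step:
  fixes A :: "'a fm"
  assumes IH: "\<And>A' \<Theta>' \<Gamma>' \<Delta>' C'. size (A' :: 'a fm) < size A \<Longrightarrow> fderiv \<Theta>' A' \<Longrightarrow> fderiv (\<Gamma>'@[A']@\<Delta>') C' \<Longrightarrow> fderiv (\<Gamma>'@\<Theta>'@\<Delta>') C'"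
    and th: "fderiv \<Theta> A"
  shows "fderiv L C \<Longrightarrow> L = \<Gamma>@[A]@\<Delta> \<Longrightarrow> fderiv (\<Gamma>@\<Theta>@\<Delta>) C"
proof (induction arbitrary: \<Gamma> \<Delta> rule: fderiv.induct)
  case (fprodL X Y \<Delta>0 C)
  show ?case
  proof (cases \<Gamma>)
    case Nil
    then have A: "A = Prod X Y" and D: "\<Delta> = \<Delta>0" using fprodL by auto
    have cX: "\<And>\<Theta> \<Gamma> \<Delta> C. fderiv \<Theta> X \<Longrightarrow> fderiv (\<Gamma>@[X]@\<Delta>) C \<Longrightarrow> fderiv (\<Gamma>@\<Theta>@\<Delta>) C"
      using IH[of X] A by simp
    have cY: "\<And>\<Theta> \<Gamma> \<Delta> C. fderiv \<Theta> Y \<Longrightarrow> fderiv (\<Gamma>@[Y]@\<Delta>) C \<Longrightarrow> fderiv (\<Gamma>@\<Theta>@\<Delta>) C"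
      using IH[of Y] A by simp
    have "fderiv (\<Theta> @ \<Delta>0) C"
      by (rule cut_prod[OF cX cY th[unfolded A] refl fprodL(1)])
    then show ?thesis using Nil D by simp
  next
    case (Cons G \<Gamma>0)
    then have "G = Prod X Y" "\<Delta>0 = \<Gamma>0 @ [A] @ \<Delta>" using fprodL by auto
    with fprodL.IH[of "X#Y#\<Gamma>0" \<Delta>] have "fderiv (X#Y#\<Gamma>0 @ \<Theta> @ \<Delta>) C" by simp
    then show ?thesis using Cons \<open>G = Prod X Y\<close> fderiv.fprodL by fastforce
  qed
next
  case (fprodR \<Gamma>1 B1 \<Delta>1 B2)
  from split_app[of \<Gamma>1 \<Delta>1 \<Gamma> A \<Delta>] fprodR(6) have "(\<exists>\<Delta>'. \<Gamma>1 = \<Gamma> @ A # \<Delta>' \<and> \<Delta> = \<Delta>' @ \<Delta>1) \<or> (\<exists>\<Gamma>'. \<Delta>1 = \<Gamma>' @ A # \<Delta> \<and> \<Gamma> = \<Gamma>1 @ \<Gamma>')" by simp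
  then show ?case
  proof (elim disjE exE conjE)
    fix \<Delta>' assume a: "\<Gamma>1 = \<Gamma> @ A # \<Delta>'" "\<Delta> = \<Delta>' @ \<Delta>1"
    have "\<Gamma>1 = \<Gamma> @ [A] @ \<Delta>'" using a by simp
    from fprodR.IH(1)[OF this] have "fderiv (\<Gamma> @ \<Theta> @ \<Delta>') B1" .
    from prodR_gen[OF this, of \<Delta>1 B2] fprodR.hyps a show ?thesis by simp
  next
    fix \<Gamma>' assume a: "\<Delta>1 = \<Gamma>' @ A # \<Delta>" "\<Gamma> = \<Gamma>1 @ \<Gamma>'"
    have "\<Delta>1 = \<Gamma>' @ [A] @ \<Delta>" using a by simp
    from fprodR.IH(2)[OF this] have "fderiv (\<Gamma>' @ \<Theta> @ \<Delta>) B2" .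
    from fderiv.fprodR[OF fprodR(1,2) this] a show ?thesis by simp
  qed
next
  case (fid p)
  then have "\<Gamma> = []" "\<Delta> = []" "A = Atom p"
    by (auto simp: Cons_eq_append_conv append_eq_Cons_conv)
  then show ?case using th by simp
qed

lemma cut_adm: "fderiv \<Theta> A \<Longrightarrow> fderiv (\<Gamma>@[A]@\<Delta>) C \<Longrightarrow> fderiv (\<Gamma>@\<Theta>@\<Delta>) C"
proof (induction A arbitrary: \<Theta> \<Gamma> \<Delta> C rule: measure_induct_rule[of size])
  case (less A)
  show ?case by (rule cut_step[OF _ less(2) less(3) refl]) (rule less(1))
qed

theorem theorem1p12:
  fixes \<Gamma> :: "'a fm list" and A :: "'a fm"
  assumes "deriv \<Gamma> A"
  shows "fderiv \<Gamma> A"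
  using assms
proof (induction rule: deriv.induct)
  case (prodL A B \<Delta> C) then show ?case using fderiv.fprodL by blast
next
  case (prodR \<Gamma> A \<Delta> B) then show ?case using prodR_gen by blast
next
  case (idr A) then show ?case by (rule fid_gen)
next
  case (cut \<Theta> A \<Gamma> \<Delta> B) then show ?case using cut_adm by blast
qed

end
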